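(* Let $a_1,\dots,a_d$ be positive integers with $\gcd(a_1,\dots,a_d)=1$, and let $N$ be a positive integer which is a $\mathbb Z_{\ge0}$-linear combination of $a_1,\dots,a_d$. Let $\mathcal M$ be a maximal element of $\mathfrak M$. Then for every $0\le i<N$ there is exactly one $m\in\mathcal M$ with $m\equiv i\pmod N$. In particular every maximal element of $\mathfrak M$ has exactly $N$ elements.
   Context: $\mathcal S_+=\{N+\sum_ic_ia_i: c_i\in\mathbb Z_{\ge0}\}$, $\mathcal S_-=-\mathcal S_+$, $\mathcal S=\mathcal S_+\cup\mathcal S_-$, and $\mathfrak M=\{\mathcal M\subset\mathbb Z:\ m,m'\in\mathcal M\Rightarrow m-m'\notin\mathcal S\}$, partially ordered by inclusion. *)

theory Defs
  imports Main "HOL-Number_Theory.Cong"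
begin

text \<open>Generators a_1..a_d are encoded as a :: nat => int on indices 0..d-1.\<close>

definition Splus :: "nat \<Rightarrow> (nat \<Rightarrow> int) \<Rightarrow> int \<Rightarrow> int set" where
  "Splus d a N = {N + (\<Sum>i<d. c i * a i) | c :: nat \<Rightarrow> int. \<forall>i<d. c i \<ge> 0}"

definition Sminus :: "nat \<Rightarrow> (nat \<Rightarrow> int) \<Rightarrow> int \<Rightarrow> int set" where
  "Sminus d a N = uminus ` Splus d a N"

definition Sset :: "nat \<Rightarrow> (nat \<Rightarrow> int) \<Rightarrow> int \<Rightarrow> int set" where
  "Sset d a N = Splus d a N \<union> Sminus d a N"

definition frakM :: "nat \<Rightarrow> (nat \<Rightarrow> int) \<Rightarrow> int \<Rightarrow> int set set" where
  "frakM d a N = {M. \<forall>m\<in>M. \<forall>m'\<in>M. m - m' \<notin> Sset d a N}"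

definition maximal_frakM :: "nat \<Rightarrow> (nat \<Rightarrow> int) \<Rightarrow> int \<Rightarrow> int set \<Rightarrow> bool" where
  "maximal_frakM d a N M \<longleftrightarrow> M \<in> frakM d a N \<and> (\<forall>M'\<in>frakM d a N. M \<subseteq> M' \<longrightarrow> M' = M)"

end

theory Submission
  imports Defs
begin

lemma Sset_iff: "x \<in> Sset d a N \<longleftrightarrow> x \<in> Splus d a N \<or> -x \<in> Splus d a N"
  unfolding Sset_def Sminus_def by (auto simp: image_iff intro: bexI[where x="-x"])

lemma Splus_I:
  assumes "\<forall>i<d. c i \<ge> 0" "x = N + (\<Sum>i<d. c i * a i)" shows "x \<in> Splus d a N"
  unfolding Splus_def using assms by blast

lemma Splus_ge:
  assumes "\<forall>i<d. a i > 0" "x \<in> Splus d a N" shows "x \<ge> N"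
proof -
  obtain c where c: "\<forall>i<d. c i \<ge> 0" "x = N + (\<Sum>i<d. c i * a i)"
    using assms(2) unfolding Splus_def by blast
  have "(\<Sum>i<d. c i * a i) \<ge> 0"
    by (rule sum_nonneg) (use c assms(1) in auto)
  then show ?thesis using c by simp
qed

lemma Splus_add:
  assumes "x \<in> Splus d a N" "y \<in> Splus d a N" shows "x + y - N \<in> Splus d a N"
proof -
  obtain c where c: "\<forall>i<d. c i \<ge> 0" "x = N + (\<Sum>i<d. c i * a i)"
    using assms(1) unfolding Splus_def by blast
  obtain c' where c': "\<forall>i<d. c' i \<ge> 0" "y = N + (\<Sum>i<d. c' i * a i)"
    using assms(2) unfolding Splus_def by blast
  have "x + y - N = N + (\<Sum>i<d. (c i + c' i) * a i)"
    using c c' by (simp add: sum.distrib distrib_right)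
  moreover have "\<forall>i<d. c i + c' i \<ge> 0" using c c' by auto
  ultimately show ?thesis by (intro Splus_I) auto
qed

lemma N_in: "N \<in> Splus d a N"
proof -
  have "N = N + (\<Sum>i<d. (\<lambda>_. 0::int) i * a i)" by simp
  then show ?thesis by (rule Splus_I[rotated]) simp
qed

lemma plusN:
  assumes "\<exists>c :: nat \<Rightarrow> int. (\<forall>i<d. c i \<ge> 0) \<and> N = (\<Sum>i<d. c i * a i)"
    "x \<in> Splus d a N" shows "x + N \<in> Splus d a N"
proof -
  obtain c0 :: "nat \<Rightarrow> int" where c0: "\<forall>i<d. c0 i \<ge> 0" "N = (\<Sum>i<d. c0 i * a i)"
    using assms(1) by blast
  have "N + N \<in> Splus d a N" using c0 unfolding Splus_def by blast
  from Splus_add[OF assms(2) this] show ?thesis by (simp add: add.commute)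
qed

lemma multN:
  assumes "\<exists>c :: nat \<Rightarrow> int. (\<forall>i<d. c i \<ge> 0) \<and> N = (\<Sum>i<d. c i * a i)"
  shows "int (Suc k) * N \<in> Splus d a N"
proof (induction k)
  case 0 then show ?case using N_in by simp
next
  case (Suc k)
  from plusN[OF assms Suc] show ?case by (simp add: algebra_simps)
qed

lemma multN':
  assumes "\<exists>c :: nat \<Rightarrow> int. (\<forall>i<d. c i \<ge> 0) \<and> N = (\<Sum>i<d. c i * a i)"
    and "k \<ge> 1"
  shows "k * N \<in> Splus d a N"
proof -
  have "k = int (Suc (nat (k - 1)))" using assms(2) by simp
  then show ?thesis using multN[OF assms(1), of "nat (k - 1)"] by simp
qed

theorem mainTheorem16:
  fixes d :: nat and a :: "nat \<Rightarrow> int" and N :: int and M :: "int set"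
  assumes apos: "\<forall>i<d. a i > 0"
    and gcd1: "Gcd (a ` {..<d}) = 1"
    and Npos: "N > 0"
    and Ncomb: "\<exists>c :: nat \<Rightarrow> int. (\<forall>i<d. c i \<ge> 0) \<and> N = (\<Sum>i<d. c i * a i)"
    and Mmax: "maximal_frakM d a N M"
  shows "(\<forall>i. 0 \<le> i \<and> i < N \<longrightarrow> (\<exists>!m. m \<in> M \<and> [m = i] (mod N)))
         \<and> finite M \<and> card M = nat N"
proof -
  have MF: "\<And>m m'. m \<in> M \<Longrightarrow> m' \<in> M \<Longrightarrow> m - m' \<notin> Sset d a N"
    using Mmax unfolding maximal_frakM_def frakM_def by blast
  have Mmx: "\<And>M'. M' \<in> frakM d a N \<Longrightarrow> M \<subseteq> M' \<Longrightarrow> M' = M"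
    using Mmax unfolding maximal_frakM_def by blast
  have notS: "\<And>x. x \<in> Splus d a N \<Longrightarrow> x \<ge> N" using Splus_ge[OF apos] by blast
  have zero: "0 \<notin> Sset d a N" using notS[of 0] Npos by (auto simp: Sset_iff)
  have uniq: "m = m'" if "m \<in> M" "m' \<in> M" "[m = m'] (mod N)" for m m'
  proof (rule ccontr)
    assume ne: "m \<noteq> m'"
    from that(3) have "N dvd (m - m')" by (simp add: cong_iff_dvd_diff)
    then obtain k where k: "m - m' = N * k" by blast
    have "k \<noteq> 0" using k ne by auto
    then have "k \<ge> 1 \<or> -k \<ge> 1" by linarith
    then show False
    proof
      assume "k \<ge> 1"
      then have "m - m' \<in> Splus d a N" using multN'[OF Ncomb, of k] k by (simp add: mult.commute)
      then show False using MF[OF that(1,2)] by (auto simp: Sset_iff)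
    next
      assume "-k \<ge> 1"
      then have "-(m - m') \<in> Splus d a N" using multN'[OF Ncomb, of "-k"] k by (simp add: mult.commute)
      then show False using MF[OF that(1,2)] by (auto simp: Sset_iff)
    qed
  qed
  have inj: "inj_on (\<lambda>m. m mod N) M"
    by (rule inj_onI) (use uniq in \<open>auto simp: cong_def\<close>)
  have img: "(\<lambda>m. m mod N) ` M \<subseteq> {0..<N}" using Npos by auto
  have fin: "finite M"
    using finite_imageD[OF finite_subset[OF img] inj] by simp
  have ne: "M \<noteq> {}"
  proof
    assume "M = {}"
    have "{0} \<in> frakM d a N" using zero unfolding frakM_def by auto
    from Mmx[OF this] \<open>M = {}\<close> show False by auto
  qed
  define lo where "lo = Min M"
  define hi where "hi = Max M"
  have lo: "\<And>m. m \<in> M \<Longrightarrow> lo \<le> m" and hi: "\<And>m. m \<in> M \<Longrightarrow> m \<le> hi"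
    using fin by (auto simp: lo_def hi_def)
  have lohi: "lo \<le> hi" using ne lo hi by fastforce
  define A where "A x \<longleftrightarrow> (\<exists>m\<in>M. x - m \<in> Splus d a N)" for x
  define B where "B x \<longleftrightarrow> (\<exists>m\<in>M. m - x \<in> Splus d a N)" for x
  have Alo: "A x \<Longrightarrow> x \<ge> lo + N" for x
  proof -
    assume "A x" then obtain m where "m \<in> M" "x - m \<in> Splus d a N" unfolding A_def by blast
    with lo[of m] notS[of "x - m"] show ?thesis by linarith
  qed
  have Bhi: "B x \<Longrightarrow> x \<le> hi - N" for x
  proof -
    assume "B x" then obtain m where "m \<in> M" "m - x \<in> Splus d a N" unfolding B_def by blast
    with hi[of m] notS[of "m - x"] show ?thesis by linarith
  qed
  have BA: "\<not> (B x \<and> A (x + N))" for x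
  proof
    assume "B x \<and> A (x + N)"
    then obtain m m' where mm: "m \<in> M" "m' \<in> M" "m - x \<in> Splus d a N" "x + N - m' \<in> Splus d a N"
      unfolding A_def B_def by blast
    from Splus_add[OF mm(3,4)] have "m - m' \<in> Splus d a N" by simp
    then show False using MF[OF mm(1,2)] by (auto simp: Sset_iff)
  qed
  have exist: "\<exists>m\<in>M. [m = i] (mod N)" if i: "0 \<le> i" "i < N" for i
  proof (rule ccontr)
    assume none: "\<not> (\<exists>m\<in>M. [m = i] (mod N))"
    have cover: "A x \<or> B x" if cx: "[x = i] (mod N)" for x
    proof (rule ccontr)
      assume nab: "\<not> (A x \<or> B x)"
      have "insert x M \<in> frakM d a N"
        unfolding frakM_def
      proof (intro CollectI ballI)
        fix u v assume u: "u \<in> insert x M" and v: "v \<in> insert x M"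
        show "u - v \<notin> Sset d a N"
        proof (cases "u = x")
          case True
          then show ?thesis
          proof (cases "v = x")
            case True with \<open>u = x\<close> show ?thesis using zero by simp
          next
            case False
            then have "v \<in> M" using v by auto
            then show ?thesis using nab True unfolding A_def B_def by (auto simp: Sset_iff)
          qed
        next
          case False
          then have uM: "u \<in> M" using u by auto
          show ?thesis
          proof (cases "v = x")
            case True
            then show ?thesis using nab uM unfolding A_def B_def by (auto simp: Sset_iff)
          next
            case False
            then have "v \<in> M" using v by auto
            then show ?thesis using MF uM by blast
          qed
        qed
      qed
      from Mmx[OF this] have "x \<in> M" by auto
      with none cx show False by blast
    qed
    define j0 where "j0 = (lo - i) div N"
    define j1 where "j1 = (hi - i) div N"
    have x0: "i + j0 * N \<le> lo"
    proof -
      have "(lo - i) mod N \<ge> 0" using Npos by simp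
      moreover have "(lo - i) div N * N + (lo - i) mod N = lo - i" by simp
      ultimately show ?thesis unfolding j0_def by linarith
    qed
    have x1: "i + j1 * N > hi - N"
    proof -
      have "(hi - i) mod N < N" using Npos by simp
      moreover have "(hi - i) div N * N + (hi - i) mod N = hi - i" by simp
      ultimately show ?thesis unfolding j1_def by linarith
    qed
    have j01: "j0 \<le> j1" unfolding j0_def j1_def using lohi Npos by (simp add: zdiv_mono1)
    define Q where "Q n \<longleftrightarrow> A (i + (int n + j0) * N)" for n
    have cg: "[i + k * N = i] (mod N)" for k by (simp add: cong_def)
    have Qn1: "Q (nat (j1 - j0))"
    proof -
      have e: "i + (int (nat (j1 - j0)) + j0) * N = i + j1 * N" using j01 by simp
      have "\<not> B (i + j1 * N)" using Bhi[of "i + j1 * N"] x1 by linarith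
      then have "A (i + j1 * N)" using cover[OF cg[of j1]] by blast
      then show ?thesis unfolding Q_def e .
    qed
    define n where "n = (LEAST n. Q n)"
    have Qn: "Q n" unfolding n_def using Qn1 by (rule LeastI)
    have "n \<noteq> 0"
    proof
      assume "n = 0"
      with Qn have "A (i + j0 * N)" unfolding Q_def by simp
      from Alo[OF this] x0 Npos show False by simp
    qed
    then obtain n' where n': "n = Suc n'" by (cases n) auto
    have "\<not> Q n'" unfolding n_def by (rule not_less_Least) (simp add: n' n_def[symmetric])
    then have "\<not> A (i + (int n' + j0) * N)" unfolding Q_def .
    then have "B (i + (int n' + j0) * N)" using cover[OF cg[of "int n' + j0"]] by blast
    moreover have "A (i + (int n' + j0) * N + N)"
      using Qn unfolding Q_def n' by (simp add: algebra_simps)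
    ultimately show False using BA by blast
  qed
  have part1: "\<forall>i. 0 \<le> i \<and> i < N \<longrightarrow> (\<exists>!m. m \<in> M \<and> [m = i] (mod N))"
  proof (intro allI impI)
    fix i assume "0 \<le> i \<and> i < N"
    then obtain m where m: "m \<in> M" "[m = i] (mod N)" using exist by blast
    show "\<exists>!m. m \<in> M \<and> [m = i] (mod N)"
    proof (rule ex1I[of _ m])
      show "m \<in> M \<and> [m = i] (mod N)" using m by blast
      fix m' assume "m' \<in> M \<and> [m' = i] (mod N)"
      then show "m' = m" using uniq m by (meson cong_sym cong_trans)
    qed
  qed
  have "(\<lambda>m. m mod N) ` M = {0..<N}"
  proof
    show "(\<lambda>m. m mod N) ` M \<subseteq> {0..<N}" by (rule img)
    show "{0..<N} \<subseteq> (\<lambda>m. m mod N) ` M"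
    proof
      fix i assume "i \<in> {0..<N}"
      then obtain m where "m \<in> M" "[m = i] (mod N)" using exist by auto
      then show "i \<in> (\<lambda>m. m mod N) ` M" using \<open>i \<in> {0..<N}\<close> by (force simp: cong_def)
    qed
  qed
  then have "card M = card {0..<N}" using card_image[OF inj] by simp
  then show ?thesis using part1 fin by simp
qed

end
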